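(* Let $(\mathcal I,T)$ be a system of class $\mathcal{DRIS}(\gamma)$ for some $\gamma>0$. Then its block system belongs to the Good Class. Consequently $\mathcal{DRIS}=\bigcup_{\gamma>0}\mathcal{DRIS}(\gamma)\subset\mathcal{DRBGC}$.
   Context: Let $\mathcal I=[0,1]$. A binary dynamical system is given by $c\in]0,1[$ and two $C^2$ bijections, $a:[0,1]\to[0,c]$ and $b:[0,1]\to[c,1]$ (the inverse branches). The map $T$ equals $a^{-1}$ on $]0,c[$ and $b^{-1}$ on $]c,1[$. Class $\mathcal{DR}$: $a$ is increasing, $b$ is decreasing, $a(0)=0$, $a(1)=c$, $b(0)=1$, $b(1)=c$, $a'>0$ and $b'<0$ on $[0,1]$, and $a'(x)<1$, $b'(x)>-1$ for $x\in]0,1]$. Class $\mathcal{DRI}$: class $\mathcal{DR}$ with moreover $a'(0)=1$. Let $q(n)=a^n(1)$. Block system: for $m\ge1$, $\mathcal J_m=]q(m),q(m-1)[$ and $g_m=a^{m-1}\circ b$. The block map $\widehat T$ equals $g_m^{-1}$ on $\mathcal J_m$. Let $\mathcal G^n$ be the set of compositions $g_{m_1}\circ\cdots\circ g_{m_n}$. The block system is in the Good Class if: - (a) the Dirichlet series $\sum_{m\ge1}|\mathcal J_m|^s$ has abscissa of convergence $<1$; - (b) $\limsup_n\eta_n<1$, where $\eta_n=\sup\{|g'(x)|:g\in\mathcal G^n,x\in\mathcal I\}$; - (c) there is $L\ge1$ with $L^{-1}\le|g_m'(x)/g_m'(y)|\le L$ for all $m\ge1$ and $x,y\in\mathcal I$.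 $\mathcal{DRBGC}$ is the class of $\mathcal{DRI}$ systems whose block system is in the Good Class. $\mathcal{SV}_0^*$ denotes the set of positive functions $V\in C^1(]0,1])$ such that: - $V$ is slowly varying at $0$, i.e. $V(tx)/V(x)\to1$ as $x\to0^+$ for every $t>0$; - $xV'(x)/V(x)\to0$ as $x\to0^+$. For $\gamma>0$, $\mathcal{DRIS}(\gamma)$ is the class of $\mathcal{DRI}$ systems such that $a(x)=x-u(x)$, where $u\in C^2([0,1])$, $u(0)=u'(0)=0$, $u'(x)\in[0,1]$, and $u'(x)=x^\gamma V(x)$ on $]0,1]$ for some $V\in\mathcal{SV}_0^*$. *)

theory Defs
  imports "HOL-Analysis.Analysis" "HOL-Library.Liminf_Limsup"
begin

definition D01 :: "(real \<Rightarrow> real) \<Rightarrow> real \<Rightarrow> real" where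
  "D01 f x = vector_derivative f (at x within {0..1})"

definition Dh :: "(real \<Rightarrow> real) \<Rightarrow> real \<Rightarrow> real" where
  "Dh f x = vector_derivative f (at x within {0<..1})"

definition C2_01 :: "(real \<Rightarrow> real) \<Rightarrow> bool" where
  "C2_01 f \<longleftrightarrow>
     (\<forall>x\<in>{0..1}. f differentiable (at x within {0..1})) \<and>
     (\<forall>x\<in>{0..1}. D01 f differentiable (at x within {0..1})) \<and>
     continuous_on {0..1} (D01 (D01 f))"

definition C1_half :: "(real \<Rightarrow> real) \<Rightarrow> bool" where
  "C1_half f \<longleftrightarrow>
     (\<forall>x\<in>{0<..1}. f differentiable (at x within {0<..1})) \<and>
     continuous_on {0<..1} (Dh f)"

(* binary dynamical system given by c and inverse branches a, b *)
definition binary_system :: "real \<Rightarrow> (real \<Rightarrow> real) \<Rightarrow> (real \<Rightarrow> real) \<Rightarrow> bool" where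
  "binary_system c a b \<longleftrightarrow> 0 < c \<and> c < 1 \<and>
     C2_01 a \<and> C2_01 b \<and> bij_betw a {0..1} {0..c} \<and> bij_betw b {0..1} {c..1}"

definition DR :: "real \<Rightarrow> (real \<Rightarrow> real) \<Rightarrow> (real \<Rightarrow> real) \<Rightarrow> bool" where
  "DR c a b \<longleftrightarrow> binary_system c a b \<and>
     strict_mono_on {0..1} a \<and> strict_antimono_on {0..1} b \<and>
     a 0 = 0 \<and> a 1 = c \<and> b 0 = 1 \<and> b 1 = c \<and>
     (\<forall>x\<in>{0..1}. D01 a x > 0 \<and> D01 b x < 0) \<and>
     (\<forall>x\<in>{0<..1}. D01 a x < 1 \<and> D01 b x > -1)"

definition DRI :: "real \<Rightarrow> (real \<Rightarrow> real) \<Rightarrow> (real \<Rightarrow> real) \<Rightarrow> bool" where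
  "DRI c a b \<longleftrightarrow> DR c a b \<and> D01 a 0 = 1"

definition qpt :: "(real \<Rightarrow> real) \<Rightarrow> nat \<Rightarrow> real" where
  "qpt a n = (a ^^ n) 1"

(* length of J_m = ]q(m), q(m-1)[ , for m \<ge> 1 *)
definition Jlen :: "(real \<Rightarrow> real) \<Rightarrow> nat \<Rightarrow> real" where
  "Jlen a m = qpt a (m - 1) - qpt a m"

definition gblk :: "(real \<Rightarrow> real) \<Rightarrow> (real \<Rightarrow> real) \<Rightarrow> nat \<Rightarrow> real \<Rightarrow> real" where
  "gblk a b m = (a ^^ (m - 1)) \<circ> b"

definition gcomp :: "(real \<Rightarrow> real) \<Rightarrow> (real \<Rightarrow> real) \<Rightarrow> nat list \<Rightarrow> real \<Rightarrow> real" where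
  "gcomp a b ms = foldr (\<lambda>m h. gblk a b m \<circ> h) ms id"

(* abscissa of convergence of sum_{m\<ge>1} |J_m|^s (terms positive, so real s suffice) *)
definition abscissa_J :: "(real \<Rightarrow> real) \<Rightarrow> ereal" where
  "abscissa_J a = Inf {ereal s | s. summable (\<lambda>k. Jlen a (Suc k) powr s)}"

definition eta :: "(real \<Rightarrow> real) \<Rightarrow> (real \<Rightarrow> real) \<Rightarrow> nat \<Rightarrow> ereal" where
  "eta a b n = Sup {ereal \<bar>D01 (gcomp a b ms) x\<bar> | ms x.
       length ms = n \<and> (\<forall>m\<in>set ms. 1 \<le> m) \<and> x \<in> {0..1}}"

definition good_class :: "(real \<Rightarrow> real) \<Rightarrow> (real \<Rightarrow> real) \<Rightarrow> bool" where
  "good_class a b \<longleftrightarrow>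
     abscissa_J a < 1 \<and>
     limsup (eta a b) < 1 \<and>
     (\<exists>L\<ge>1. \<forall>m\<ge>1. \<forall>x\<in>{0..1}. \<forall>y\<in>{0..1}.
        inverse L \<le> \<bar>D01 (gblk a b m) x / D01 (gblk a b m) y\<bar> \<and>
        \<bar>D01 (gblk a b m) x / D01 (gblk a b m) y\<bar> \<le> L)"

definition DRBGC :: "real \<Rightarrow> (real \<Rightarrow> real) \<Rightarrow> (real \<Rightarrow> real) \<Rightarrow> bool" where
  "DRBGC c a b \<longleftrightarrow> DRI c a b \<and> good_class a b"

definition SV0star :: "(real \<Rightarrow> real) \<Rightarrow> bool" where
  "SV0star V \<longleftrightarrow>
     (\<forall>x\<in>{0<..1}. V x > 0) \<and> C1_half V \<and>
     (\<forall>t>0. ((\<lambda>x. V (t * x) / V x) \<longlongrightarrow> 1) (at_right 0)) \<and>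
     ((\<lambda>x. x * Dh V x / V x) \<longlongrightarrow> 0) (at_right 0)"

definition DRIS :: "real \<Rightarrow> real \<Rightarrow> (real \<Rightarrow> real) \<Rightarrow> (real \<Rightarrow> real) \<Rightarrow> bool" where
  "DRIS \<gamma> c a b \<longleftrightarrow> DRI c a b \<and>
     (\<exists>u V. (\<forall>x\<in>{0..1}. a x = x - u x) \<and> C2_01 u \<and> u 0 = 0 \<and> D01 u 0 = 0 \<and>
        (\<forall>x\<in>{0..1}. D01 u x \<in> {0..1}) \<and> SV0star V \<and>
        (\<forall>x\<in>{0<..1}. D01 u x = x powr \<gamma> * V x))"

end

theory Submission
  imports Defs
begin



definition gd :: "(real\<Rightarrow>real) \<Rightarrow> bool" where
 "gd f \<longleftrightarrow> f ` {0..1} \<subseteq> {0..1} \<and> (\<forall>x\<in>{0..1}. (f has_vector_derivative D01 f x) (at x within {0..1}))"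

lemma D01_eq:
  assumes "x \<in> {0..1}" "(f has_vector_derivative d) (at x within {0..1})"
  shows "D01 f x = d"
  unfolding D01_def using vector_derivative_within_cbox[of 0 1 x f d] assms by (simp add: cbox_interval)

lemma id_vd: "(id has_vector_derivative 1) (at x within {0..1})" for x :: real
    by (simp add: has_vector_derivative_id id_def)

lemma D01_id: "x \<in> {0..1} \<Longrightarrow> D01 id x = 1"
  using D01_eq id_vd by blast

lemma gd_id: "gd id" unfolding gd_def using id_vd D01_id by auto

lemma gd_comp:
  assumes "gd f" "gd g"
  shows "gd (g \<circ> f)" and "\<And>x. x \<in> {0..1} \<Longrightarrow> D01 (g \<circ> f) x = D01 g (f x) * D01 f x"
proof -
  have h: "((g \<circ> f) has_vector_derivative (D01 g (f x) * D01 f x)) (at x within {0..1})"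
    if x: "x \<in> {0..1}" for x
  proof -
    have fx: "f x \<in> {0..1}" using assms(1) x unfolding gd_def image_subset_iff by blast
    have "(g has_vector_derivative D01 g (f x)) (at (f x) within f ` {0..1})"
      using assms fx unfolding gd_def by (meson has_vector_derivative_within_subset)
    moreover have "(f has_vector_derivative D01 f x) (at x within {0..1})"
      using assms(1) x unfolding gd_def by blast
    ultimately have "((g \<circ> f) has_vector_derivative (D01 f x *\<^sub>R D01 g (f x))) (at x within {0..1})"
      using vector_diff_chain_within by blast
    then show ?thesis by (simp add: mult.commute)
  qed
  show "\<And>x. x \<in> {0..1} \<Longrightarrow> D01 (g \<circ> f) x = D01 g (f x) * D01 f x"
    using h D01_eq by blast
  then show "gd (g \<circ> f)" using h assms unfolding gd_def image_subset_iff by auto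
qed




lemma C2_gd: assumes "C2_01 f" "f ` {0..1} \<subseteq> {0..1}" shows "gd f"
  using assms unfolding gd_def C2_01_def D01_def using vector_derivative_works by blast

lemma C2_cont: assumes "C2_01 f" shows "continuous_on {0..1} (D01 f)"
  using assms unfolding C2_01_def
  by (meson continuous_on_eq_continuous_within differentiable_imp_continuous_within)

lemma C2_cont0: assumes "C2_01 f" shows "continuous_on {0..1} f"
  using assms unfolding C2_01_def
  by (meson continuous_on_eq_continuous_within differentiable_imp_continuous_within)

locale dri =
  fixes c :: real and a b :: "real \<Rightarrow> real"
  assumes DRI: "DRI c a b"
begin

lemma DR: "DR c a b" using DRI unfolding DRI_def by auto
lemma bs: "binary_system c a b" using DR unfolding DR_def by auto
lemma c01: "0 < c" "c < 1" using bs unfolding binary_system_def by auto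
lemma C2a: "C2_01 a" and C2b: "C2_01 b" using bs unfolding binary_system_def by auto
lemma a_img: "a ` {0..1} = {0..c}" using bs unfolding binary_system_def bij_betw_def by auto
lemma b_img: "b ` {0..1} = {c..1}" using bs unfolding binary_system_def bij_betw_def by auto
lemma a_in: "x \<in> {0..1} \<Longrightarrow> a x \<in> {0..c}" using a_img by auto
lemma b_in: "x \<in> {0..1} \<Longrightarrow> b x \<in> {c..1}" using b_img by auto
lemma gd_a: "gd a" using C2_gd[OF C2a] a_img c01 by auto
lemma gd_b: "gd b" using C2_gd[OF C2b] b_img c01 by auto
lemma a0: "a 0 = 0" and a1: "a 1 = c" using DR unfolding DR_def by auto
lemma a_smono: "strict_mono_on {0..1} a" using DR unfolding DR_def by auto
lemma a_mono: "x \<in> {0..1} \<Longrightarrow> y \<in> {0..1} \<Longrightarrow> x \<le> y \<Longrightarrow> a x \<le> a y"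
  using a_smono by (metis order_le_less strict_mono_onD)
lemma a'_pos: "x \<in> {0..1} \<Longrightarrow> 0 < D01 a x" using DR unfolding DR_def by auto
lemma b'_neg: "x \<in> {0..1} \<Longrightarrow> D01 b x < 0" using DR unfolding DR_def by auto
lemma a'_lt: "x \<in> {0<..1} \<Longrightarrow> D01 a x < 1" using DR unfolding DR_def by auto
lemma b'_gt: "x \<in> {0<..1} \<Longrightarrow> D01 b x > -1" using DR unfolding DR_def by auto
lemma a'_le: "x \<in> {0..1} \<Longrightarrow> D01 a x \<le> 1"
  using DRI a'_lt unfolding DRI_def by (cases "x = 0") (auto simp: less_imp_le)
lemma cont_a': "continuous_on {0..1} (D01 a)" using C2_cont[OF C2a] .
lemma cont_b': "continuous_on {0..1} (D01 b)" using C2_cont[OF C2b] .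

lemma b'_ge: assumes "x \<in> {0..1}" shows "D01 b x \<ge> -1"
proof (cases "x = 0")
  case False then show ?thesis using b'_gt[of x] assms by auto
next
  case True
  have "(D01 b \<longlongrightarrow> D01 b 0) (at 0 within {0..1})"
    using cont_b' by (simp add: continuous_on_def)
  then have t: "(D01 b \<longlongrightarrow> D01 b 0) (at_right 0)"
    using at_within_Icc_at_right[of "0::real" 1] by simp
  have "eventually (\<lambda>y. -1 \<le> D01 b y) (at_right (0::real))"
    unfolding eventually_at_right_field
    by (rule exI[of _ 1]) (auto intro!: less_imp_le b'_gt)
  then have "-1 \<le> D01 b 0" using tendsto_lowerbound[OF t] by simp
  then show ?thesis using True by simp
qed

lemma abs_b'_le: "x \<in> {0..1} \<Longrightarrow> \<bar>D01 b x\<bar> \<le> 1"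
  using b'_ge b'_neg by fastforce

lemma gd_an: "gd (a ^^ n)"
proof (induction n)
  case 0 then show ?case using gd_id unfolding funpow.simps(1) .
next
  case (Suc n) show ?case unfolding funpow.simps(2) by (rule gd_comp(1)[OF Suc gd_a])
qed

lemma D01_an_Suc: "x \<in> {0..1} \<Longrightarrow> D01 (a ^^ Suc n) x = D01 a ((a ^^ n) x) * D01 (a ^^ n) x"
  unfolding funpow.simps(2) by (rule gd_comp(2)[OF gd_an gd_a])

lemma D01_an_Suc': "x \<in> {0..1} \<Longrightarrow> D01 (a ^^ Suc n) x = D01 (a ^^ n) (a x) * D01 a x"
  unfolding funpow_Suc_right by (rule gd_comp(2)[OF gd_a gd_an])

lemma D01_an0: "x \<in> {0..1} \<Longrightarrow> D01 (a ^^ 0) x = 1"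
  unfolding funpow.simps(1) by (rule D01_id)

lemma an_in: "x \<in> {0..1} \<Longrightarrow> (a ^^ n) x \<in> {0..1}"
  using gd_an unfolding gd_def by blast

lemma D01_an_bounds: "x \<in> {0..1} \<Longrightarrow> 0 < D01 (a ^^ n) x \<and> D01 (a ^^ n) x \<le> 1"
proof (induction n)
  case 0 then have "D01 (a ^^ 0) x = 1" by (rule D01_an0)
  then show ?case by (simp only:) simp
next
  case (Suc n)
  have "0 < D01 a ((a ^^ n) x)" "D01 a ((a ^^ n) x) \<le> 1" using a'_pos a'_le an_in Suc by auto
  then show ?case unfolding D01_an_Suc[OF Suc(2), of n] using Suc
    by (simp add: mult_le_one)
qed

lemma an_mono: "x \<in> {0..1} \<Longrightarrow> y \<in> {0..1} \<Longrightarrow> x \<le> y \<Longrightarrow> (a ^^ n) x \<le> (a ^^ n) y"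
  by (induction n) (auto intro!: a_mono an_in)

end



context dri begin

lemma gd_g: "gd (gblk a b m)"
  unfolding gblk_def by (rule gd_comp(1)[OF gd_b gd_an])

lemma D01_g: "x \<in> {0..1} \<Longrightarrow> D01 (gblk a b m) x = D01 (a ^^ (m - 1)) (b x) * D01 b x"
  unfolding gblk_def by (rule gd_comp(2)[OF gd_b gd_an])

lemma g_in: "x \<in> {0..1} \<Longrightarrow> gblk a b m x \<in> {0..1}"
  using gd_g unfolding gd_def by blast

lemma bx01: "x \<in> {0..1} \<Longrightarrow> b x \<in> {0..1}" using b_in c01 by fastforce

lemma abs_D01_g_le: assumes "x \<in> {0..1}" shows "\<bar>D01 (gblk a b m) x\<bar> \<le> 1"
proof -
  have h: "0 < D01 (a ^^ (m - 1)) (b x) \<and> D01 (a ^^ (m - 1)) (b x) \<le> 1" by (rule D01_an_bounds[OF bx01[OF assms]])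
  then have "\<bar>D01 (a ^^ (m - 1)) (b x)\<bar> \<le> 1" by (auto simp: abs_le_iff)
  moreover have "\<bar>D01 b x\<bar> \<le> 1" using abs_b'_le assms by auto
  ultimately show ?thesis unfolding D01_g[OF assms] abs_mult by (simp add: mult_le_one)
qed

lemma gcomp_Cons: "gcomp a b (m # ms) = gblk a b m \<circ> gcomp a b ms"
  by (simp add: gcomp_def)
lemma gcomp_Nil: "gcomp a b [] = id"
  by (simp add: gcomp_def)

lemma gd_gcomp: "gd (gcomp a b ms)"
proof (induction ms)
  case Nil then show ?case unfolding gcomp_Nil by (rule gd_id)
next
  case (Cons m ms) then show ?case unfolding gcomp_Cons by (rule gd_comp(1)[OF _ gd_g])
qed

lemma gcomp_in: "x \<in> {0..1} \<Longrightarrow> gcomp a b ms x \<in> {0..1}"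
  using gd_gcomp unfolding gd_def by blast

lemma D01_gcomp_Cons: "x \<in> {0..1} \<Longrightarrow>
   D01 (gcomp a b (m # ms)) x = D01 (gblk a b m) (gcomp a b ms x) * D01 (gcomp a b ms) x"
  unfolding gcomp_Cons by (rule gd_comp(2)[OF gd_gcomp gd_g])

lemma abs_D01_gcomp_le: "x \<in> {0..1} \<Longrightarrow> \<bar>D01 (gcomp a b ms) x\<bar> \<le> 1"
proof (induction ms)
  case Nil then show ?case unfolding gcomp_Nil by (simp only: D01_id[OF Nil])
next
  case (Cons m ms)
  have "\<bar>D01 (gblk a b m) (gcomp a b ms x)\<bar> \<le> 1" using abs_D01_g_le gcomp_in Cons by blast
  then show ?case unfolding D01_gcomp_Cons[OF Cons(2)] abs_mult using Cons
    by (simp add: mult_le_one)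
qed

definition rho where "rho = (SOME r. r < 1 \<and> (\<forall>y\<in>{c..1}. D01 a y \<le> r))"
definition beta where "beta = (SOME r. r < 1 \<and> (\<forall>y\<in>{c..1}. - D01 b y \<le> r))"

lemma c_sub: "{c..1} \<subseteq> {0..1}" using c01 by auto

lemma rho: "rho < 1 \<and> (\<forall>y\<in>{c..1}. D01 a y \<le> rho)"
proof -
  obtain x where x: "x \<in> {c..1}" "\<forall>y\<in>{c..1}. D01 a y \<le> D01 a x"
    using continuous_attains_sup[of "{c..1}" "D01 a"] continuous_on_subset[OF cont_a' c_sub] c01 by auto
  have "D01 a x < 1" using a'_lt x c01 by auto
  then have "\<exists>r. r < 1 \<and> (\<forall>y\<in>{c..1}. D01 a y \<le> r)" using x by blast
  then show ?thesis unfolding rho_def by (rule someI_ex)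
qed

lemma beta: "beta < 1 \<and> (\<forall>y\<in>{c..1}. - D01 b y \<le> beta)"
proof -
  have cb: "continuous_on {c..1} (\<lambda>y. - D01 b y)"
    using continuous_on_minus[OF continuous_on_subset[OF cont_b' c_sub]] .
  obtain x where x: "x \<in> {c..1}" "\<forall>y\<in>{c..1}. - D01 b y \<le> - D01 b x"
    using continuous_attains_sup[of "{c..1}" "\<lambda>y. - D01 b y"] cb c01 by auto
  have "- D01 b x < 1" using b'_gt[of x] x c01 by auto
  then have "\<exists>r. r < 1 \<and> (\<forall>y\<in>{c..1}. - D01 b y \<le> r)" using x by blast
  then show ?thesis unfolding beta_def by (rule someI_ex)
qed

lemma g_on_c1: assumes "z \<in> {c..1}" shows "\<bar>D01 (gblk a b m) z\<bar> \<le> beta"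
proof -
  have z: "z \<in> {0..1}" using assms c_sub by auto
  have h: "0 < D01 (a ^^ (m - 1)) (b z) \<and> D01 (a ^^ (m - 1)) (b z) \<le> 1" by (rule D01_an_bounds[OF bx01[OF z]])
  then have "\<bar>D01 (a ^^ (m - 1)) (b z)\<bar> \<le> 1" by (auto simp: abs_le_iff)
  moreover have "\<bar>D01 b z\<bar> \<le> beta" using beta assms b'_neg[OF z] by auto
  moreover have "0 \<le> beta" using calculation by linarith
  ultimately show ?thesis unfolding D01_g[OF z] abs_mult
    using mult_mono[of "\<bar>D01 (a ^^ (m - 1)) (b z)\<bar>" 1 "\<bar>D01 b z\<bar>" beta] by simp
qed

lemma g_m2: assumes "y \<in> {0..1}" "2 \<le> m" shows "\<bar>D01 (gblk a b m) y\<bar> \<le> rho"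
proof -
  obtain k where k: "m - 1 = Suc k" using assms by (cases "m - 1") auto
  have by': "b y \<in> {c..1}" using b_in assms by auto
  have by01: "b y \<in> {0..1}" using bx01 assms by auto
  have e: "D01 (a ^^ (m - 1)) (b y) = D01 (a ^^ k) (a (b y)) * D01 a (b y)"
    unfolding k by (rule D01_an_Suc'[OF by01])
  have ab01: "a (b y) \<in> {0..1}" using a_in[OF by01] c01 by auto
  have "0 < D01 (a ^^ k) (a (b y))" "D01 (a ^^ k) (a (b y)) \<le> 1" using D01_an_bounds[OF ab01] by auto
  moreover have "0 < D01 a (b y)" "D01 a (b y) \<le> rho" using a'_pos[OF by01] rho by' by auto
  ultimately have "\<bar>D01 (a ^^ (m - 1)) (b y)\<bar> \<le> rho" unfolding e
    using mult_mono[of "D01 (a ^^ k) (a (b y))" 1 "D01 a (b y)" rho] by simp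
  moreover have "\<bar>D01 b y\<bar> \<le> 1" using abs_b'_le assms by auto
  ultimately show ?thesis unfolding D01_g[OF assms(1)] abs_mult
    using mult_mono[of "\<bar>D01 (a ^^ (m - 1)) (b y)\<bar>" rho "\<bar>D01 b y\<bar>" 1] by simp
qed

definition theta where "theta = max rho beta"

lemma theta_lt: "theta < 1" using rho beta unfolding theta_def by auto

lemma beta_nonneg: "0 \<le> beta"
proof -
  have "- D01 b 1 \<le> beta" using beta c01 by auto
  moreover have "D01 b 1 < 0" by (rule b'_neg) auto
  ultimately show ?thesis by linarith
qed
lemma theta_nonneg: "0 \<le> theta" using beta_nonneg unfolding theta_def by auto

lemma pair_bound: assumes "y \<in> {0..1}" "1 \<le> m1" "1 \<le> m2"
  shows "\<bar>D01 (gblk a b m1) (gblk a b m2 y)\<bar> * \<bar>D01 (gblk a b m2) y\<bar> \<le> theta"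
proof (cases "m2 = 1")
  case True
  have "gblk a b m2 y = b y" using True by (simp add: gblk_def)
  then have "\<bar>D01 (gblk a b m1) (gblk a b m2 y)\<bar> \<le> beta" using g_on_c1 b_in assms by auto
  moreover have "\<bar>D01 (gblk a b m2) y\<bar> \<le> 1" using abs_D01_g_le assms by auto
  ultimately show ?thesis unfolding theta_def
    using mult_mono[of "\<bar>D01 (gblk a b m1) (gblk a b m2 y)\<bar>" beta "\<bar>D01 (gblk a b m2) y\<bar>" 1]
    by (simp add: max.coboundedI2)
next
  case False
  then have "2 \<le> m2" using assms by auto
  then have "\<bar>D01 (gblk a b m2) y\<bar> \<le> rho" using g_m2 assms by auto
  moreover have "\<bar>D01 (gblk a b m1) (gblk a b m2 y)\<bar> \<le> 1" using abs_D01_g_le g_in assms by auto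
  ultimately show ?thesis unfolding theta_def
    using mult_mono[of "\<bar>D01 (gblk a b m1) (gblk a b m2 y)\<bar>" 1 "\<bar>D01 (gblk a b m2) y\<bar>" rho]
    by (simp add: max.coboundedI1)
qed

lemma eta_le: assumes "2 \<le> n" shows "eta a b n \<le> ereal theta"
  unfolding eta_def
proof (rule Sup_least)
  fix z assume "z \<in> {ereal \<bar>D01 (gcomp a b ms) x\<bar> | ms x.
       length ms = n \<and> (\<forall>m\<in>set ms. 1 \<le> m) \<and> x \<in> {0..1}}"
  then obtain ms x where z: "z = ereal \<bar>D01 (gcomp a b ms) x\<bar>" and
    l: "length ms = n" and m: "\<forall>m\<in>set ms. 1 \<le> m" and x: "x \<in> {0..1}" by blast
  obtain m1 m2 rest where ms: "ms = m1 # m2 # rest" using l assms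
    by (cases ms; cases "tl ms") auto
  define y where "y = gcomp a b rest x"
  have y: "y \<in> {0..1}" using gcomp_in x y_def by auto
  have e: "D01 (gcomp a b ms) x = D01 (gblk a b m1) (gblk a b m2 y) * (D01 (gblk a b m2) y * D01 (gcomp a b rest) x)"
    unfolding ms D01_gcomp_Cons[OF x] D01_gcomp_Cons[OF x, of m2 rest] y_def
    by (simp add: gcomp_Cons)
  have p: "\<bar>D01 (gblk a b m1) (gblk a b m2 y)\<bar> * \<bar>D01 (gblk a b m2) y\<bar> \<le> theta"
    using pair_bound[OF y] m ms by auto
  have r: "\<bar>D01 (gcomp a b rest) x\<bar> \<le> 1" using abs_D01_gcomp_le x by auto
  have "\<bar>D01 (gcomp a b ms) x\<bar> \<le> theta" unfolding e abs_mult mult.assoc[symmetric]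
    using mult_mono[OF p r] theta_nonneg by simp
  then show "z \<le> ereal theta" using z by simp
qed

lemma limsup_eta: "limsup (eta a b) < 1"
proof -
  have ev: "eventually (\<lambda>n. eta a b n \<le> ereal theta) sequentially"
    unfolding eventually_sequentially using eta_le by blast
  have "limsup (eta a b) \<le> ereal theta" by (rule Limsup_bounded[OF ev])
  then show ?thesis using theta_lt by (simp add: le_less_trans)
qed

end



context dri begin

lemma a'_vd: "x \<in> {0..1} \<Longrightarrow> (D01 a has_vector_derivative D01 (D01 a) x) (at x within {0..1})"
  using C2a unfolding C2_01_def D01_def[of "D01 a"] using vector_derivative_works by blast

definition M2 where "M2 = (SOME M. 0 \<le> M \<and> (\<forall>x\<in>{0..1}. \<bar>D01 (D01 a) x\<bar> \<le> M))"

lemma M2: "0 \<le> M2 \<and> (\<forall>x\<in>{0..1}. \<bar>D01 (D01 a) x\<bar> \<le> M2)"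
proof -
  have cc: "continuous_on {0..1} (\<lambda>x. \<bar>D01 (D01 a) x\<bar>)"
    using C2a unfolding C2_01_def by (intro continuous_intros) auto
  obtain x where x: "x \<in> {0..1}" "\<forall>y\<in>{0..1}. \<bar>D01 (D01 a) y\<bar> \<le> \<bar>D01 (D01 a) x\<bar>"
    using continuous_attains_sup[of "{0..1::real}" "\<lambda>x. \<bar>D01 (D01 a) x\<bar>"] cc by auto
  then have "\<exists>M. 0 \<le> M \<and> (\<forall>x\<in>{0..1}. \<bar>D01 (D01 a) x\<bar> \<le> M)" by (intro exI[of _ "\<bar>D01 (D01 a) x\<bar>"]) auto
  then show ?thesis unfolding M2_def by (rule someI_ex)
qed

lemma a'_lip: assumes "p \<in> {0..1}" "r \<in> {0..1}" shows "\<bar>D01 a p - D01 a r\<bar> \<le> M2 * \<bar>p - r\<bar>"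
proof -
  have "norm (D01 a p - D01 a r) \<le> M2 * norm (p - r)"
  proof (rule differentiable_bound[of "{0..1}" "D01 a" "\<lambda>x h. h *\<^sub>R D01 (D01 a) x"])
    show "convex {0..1::real}" by simp
    show "\<And>x. x \<in> {0..1} \<Longrightarrow> (D01 a has_derivative (\<lambda>h. h *\<^sub>R D01 (D01 a) x)) (at x within {0..1})"
      using a'_vd unfolding has_vector_derivative_def by blast
    show "\<And>x. x \<in> {0..1} \<Longrightarrow> onorm (\<lambda>h. h *\<^sub>R D01 (D01 a) x) \<le> M2"
    proof -
      fix x :: real assume x: "x \<in> {0..1}"
      have "onorm (\<lambda>h::real. h *\<^sub>R D01 (D01 a) x) = onorm (\<lambda>h::real. h) * norm (D01 (D01 a) x)"
        by (rule onorm_scaleR_left) (rule bounded_linear_ident)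
      then show "onorm (\<lambda>h. h *\<^sub>R D01 (D01 a) x) \<le> M2" using M2 x by (simp add: onorm_id)
    qed
  qed (use assms in auto)
  then show ?thesis by simp
qed

definition amin where "amin = (SOME m. 0 < m \<and> (\<forall>x\<in>{0..1}. m \<le> D01 a x))"

lemma amin: "0 < amin \<and> (\<forall>x\<in>{0..1}. amin \<le> D01 a x)"
proof -
  obtain x where x: "x \<in> {0..1}" "\<forall>y\<in>{0..1}. D01 a x \<le> D01 a y"
    using continuous_attains_inf[of "{0..1::real}" "D01 a"] cont_a' by auto
  then have "\<exists>m. 0 < m \<and> (\<forall>x\<in>{0..1}. m \<le> D01 a x)" using a'_pos by (intro exI[of _ "D01 a x"]) auto
  then show ?thesis unfolding amin_def by (rule someI_ex)
qed

definition bmin where "bmin = (SOME m. 0 < m \<and> (\<forall>x\<in>{0..1}. m \<le> - D01 b x))"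

lemma bmin: "0 < bmin \<and> (\<forall>x\<in>{0..1}. bmin \<le> - D01 b x)"
proof -
  have cb: "continuous_on {0..1} (\<lambda>y. - D01 b y)" using continuous_on_minus[OF cont_b'] .
  obtain x where x: "x \<in> {0..1}" "\<forall>y\<in>{0..1}. - D01 b x \<le> - D01 b y"
    using continuous_attains_inf[of "{0..1::real}" "\<lambda>y. - D01 b y"] cb by auto
  then have "\<exists>m. 0 < m \<and> (\<forall>x\<in>{0..1}. m \<le> - D01 b x)" using b'_neg by (intro exI[of _ "- D01 b x"]) auto
  then show ?thesis unfolding bmin_def by (rule someI_ex)
qed

definition K where "K = M2 / amin"

lemma K_nonneg: "0 \<le> K" using M2 amin unfolding K_def by auto

abbreviation q where "q n \<equiv> (a ^^ n) 1"

lemma q01: "q n \<in> {0..1}" using an_in[of 1 n] by auto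

lemma an_c: "(a ^^ n) c = q (Suc n)"
  using a1 by (simp add: funpow_Suc_right del: funpow.simps)

lemma an_range: assumes "z \<in> {c..1}" shows "(a ^^ n) z \<in> {q (Suc n)..q n}"
proof -
  have z: "z \<in> {0..1}" using assms c_sub by auto
  have c: "c \<in> {0..1}" using c01 by auto
  show ?thesis using an_mono[OF c z, of n] an_mono[OF z _, of 1 n] assms an_c by auto
qed

lemma q_dec: "q (Suc n) \<le> q n"
  using an_range[of 1 n] c01 by auto

lemma dist_step: assumes "z \<in> {c..1}" "w \<in> {c..1}"
  shows "D01 (a ^^ n) z \<le> exp (K * (1 - q n)) * D01 (a ^^ n) w"
proof (induction n)
  case 0
  have "z \<in> {0..1}" "w \<in> {0..1}" using assms c_sub by auto
  then show ?case by (simp only: D01_an0) simp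
next
  case (Suc n)
  have z: "z \<in> {0..1}" and w: "w \<in> {0..1}" using assms c_sub by auto
  define zn where "zn = (a ^^ n) z"
  define wn where "wn = (a ^^ n) w"
  define d where "d = q n - q (Suc n)"
  have zn: "zn \<in> {q (Suc n)..q n}" and wn: "wn \<in> {q (Suc n)..q n}"
    using an_range assms zn_def wn_def by auto
  have zn01: "zn \<in> {0..1}" and wn01: "wn \<in> {0..1}" using an_in z w zn_def wn_def by auto
  have d0: "0 \<le> d" using q_dec d_def by auto
  have dz: "\<bar>zn - wn\<bar> \<le> d" using zn wn d_def by auto
  have aw: "amin \<le> D01 a wn" "0 < amin" using amin wn01 by auto
  have "D01 a zn \<le> D01 a wn + M2 * \<bar>zn - wn\<bar>" using a'_lip[OF zn01 wn01] by linarith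
  also have "\<dots> \<le> D01 a wn + M2 * d" using dz M2 by (simp add: mult_left_mono)
  also have "\<dots> \<le> D01 a wn * (1 + K * d)"
  proof -
    have "M2 * d = amin * (K * d)" using aw unfolding K_def by simp
    also have "\<dots> \<le> D01 a wn * (K * d)" using aw K_nonneg d0 by (simp add: mult_right_mono)
    finally show ?thesis by (simp add: algebra_simps)
  qed
  also have "\<dots> \<le> D01 a wn * exp (K * d)"
    using a'_pos[OF wn01] by (simp add: mult_left_mono exp_ge_add_one_self)
  finally have step: "D01 a zn \<le> D01 a wn * exp (K * d)" .
  have pz: "0 < D01 a zn" using a'_pos[OF zn01] .
  have "D01 (a ^^ Suc n) z = D01 a zn * D01 (a ^^ n) z" unfolding zn_def by (rule D01_an_Suc[OF z])
  also have "\<dots> \<le> (D01 a wn * exp (K * d)) * (exp (K * (1 - q n)) * D01 (a ^^ n) w)"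
    using Suc.IH step pz D01_an_bounds[OF z, of n] by (intro mult_mono) auto
  also have "\<dots> = exp (K * (1 - q (Suc n))) * (D01 a wn * D01 (a ^^ n) w)"
    by (simp add: d_def algebra_simps flip: exp_add)
  also have "D01 a wn * D01 (a ^^ n) w = D01 (a ^^ Suc n) w"
    unfolding wn_def by (rule D01_an_Suc[OF w, symmetric])
  finally show ?case .
qed

lemma dist_an: assumes "z \<in> {c..1}" "w \<in> {c..1}"
  shows "D01 (a ^^ n) z \<le> exp K * D01 (a ^^ n) w"
proof -
  have w: "w \<in> {0..1}" using assms c_sub by auto
  have "exp (K * (1 - q n)) \<le> exp K" using q01[of n] K_nonneg by (simp add: mult_left_le)
  then show ?thesis using dist_step[OF assms, of n] D01_an_bounds[OF w, of n]
    by (meson less_imp_le mult_right_mono order_trans)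
qed

definition LL where "LL = max 1 (exp K / bmin)"

lemma ratio_le: assumes x: "x \<in> {0..1}" and y: "y \<in> {0..1}"
  shows "\<bar>D01 (gblk a b m) x / D01 (gblk a b m) y\<bar> \<le> LL"
proof -
  let ?P = "\<lambda>z. D01 (a ^^ (m - 1)) z"
  have bx: "b x \<in> {c..1}" and by': "b y \<in> {c..1}" using b_in x y by auto
  have Px: "0 < ?P (b x)" and Py: "0 < ?P (b y)" using D01_an_bounds bx01 x y by auto
  have d: "?P (b x) \<le> exp K * ?P (b y)" by (rule dist_an[OF bx by'])
  have bxx: "\<bar>D01 b x\<bar> \<le> 1" using abs_b'_le x .
  have byy: "bmin \<le> \<bar>D01 b y\<bar>" using bmin y b'_neg[OF y] by auto
  have bm: "0 < bmin" using bmin by auto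
  have "\<bar>D01 (gblk a b m) x / D01 (gblk a b m) y\<bar> = (?P (b x) / ?P (b y)) * (\<bar>D01 b x\<bar> / \<bar>D01 b y\<bar>)"
    unfolding D01_g[OF x] D01_g[OF y] using Px Py by (simp add: abs_mult)
  also have "\<dots> \<le> exp K * (1 / bmin)"
  proof (rule mult_mono)
    show "?P (b x) / ?P (b y) \<le> exp K" using d Py by (simp add: divide_le_eq)
    show "\<bar>D01 b x\<bar> / \<bar>D01 b y\<bar> \<le> 1 / bmin" using bxx byy bm
      by (simp add: frac_le)
  qed (use Px Py in auto)
  also have "\<dots> \<le> LL" unfolding LL_def by simp
  finally show ?thesis .
qed

lemma ratio_ge: assumes x: "x \<in> {0..1}" and y: "y \<in> {0..1}"
  shows "inverse LL \<le> \<bar>D01 (gblk a b m) x / D01 (gblk a b m) y\<bar>"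
proof -
  have r: "\<bar>D01 (gblk a b m) y / D01 (gblk a b m) x\<bar> \<le> LL" by (rule ratio_le[OF y x])
  have nz: "D01 (gblk a b m) x \<noteq> 0" "D01 (gblk a b m) y \<noteq> 0"
  proof -
    have "0 < D01 (a ^^ (m - 1)) (b x)" "0 < D01 (a ^^ (m - 1)) (b y)"
      using D01_an_bounds[OF bx01[OF x]] D01_an_bounds[OF bx01[OF y]] by auto
    moreover have "D01 b x < 0" "D01 b y < 0" using b'_neg x y by auto
    ultimately show "D01 (gblk a b m) x \<noteq> 0" "D01 (gblk a b m) y \<noteq> 0"
      unfolding D01_g[OF x] D01_g[OF y] by auto
  qed
  have pos: "0 < \<bar>D01 (gblk a b m) y / D01 (gblk a b m) x\<bar>" using nz by simp
  have "inverse LL \<le> inverse \<bar>D01 (gblk a b m) y / D01 (gblk a b m) x\<bar>"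
    using le_imp_inverse_le[OF r pos] .
  also have "\<dots> = \<bar>D01 (gblk a b m) x / D01 (gblk a b m) y\<bar>" by simp
  finally show ?thesis .
qed

lemma distortion: "\<exists>L\<ge>1. \<forall>m\<ge>1. \<forall>x\<in>{0..1}. \<forall>y\<in>{0..1}.
        inverse L \<le> \<bar>D01 (gblk a b m) x / D01 (gblk a b m) y\<bar> \<and>
        \<bar>D01 (gblk a b m) x / D01 (gblk a b m) y\<bar> \<le> L"
proof (intro exI[of _ LL] conjI allI impI ballI)
  show "1 \<le> LL" unfolding LL_def by simp
next
  fix m :: nat and x y :: real assume "x \<in> {0..1}" "y \<in> {0..1}"
  then show "inverse LL \<le> \<bar>D01 (gblk a b m) x / D01 (gblk a b m) y\<bar>"
      "\<bar>D01 (gblk a b m) x / D01 (gblk a b m) y\<bar> \<le> LL"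
    using ratio_le ratio_ge by blast+
qed

end



locale dris = dri +
  fixes \<gamma> :: real and u V :: "real \<Rightarrow> real"
  assumes gpos: "\<gamma> > 0"
    and au: "\<forall>x\<in>{0..1}. a x = x - u x"
    and C2u: "C2_01 u" and u0: "u 0 = 0"
    and SV: "SV0star V"
    and u'V: "\<forall>x\<in>{0<..1}. D01 u x = x powr \<gamma> * V x"
begin

lemma Vpos: "x \<in> {0<..1} \<Longrightarrow> V x > 0" using SV unfolding SV0star_def by auto

lemma V_deriv: assumes "0 < t" "t < 1" shows "(V has_real_derivative Dh V t) (at t)"
proof -
  have "V differentiable (at t within {0<..1})" using SV assms unfolding SV0star_def C1_half_def by auto
  then have "(V has_vector_derivative Dh V t) (at t within {0<..1})"
    unfolding Dh_def using vector_derivative_works by blast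
  then have "(V has_vector_derivative Dh V t) (at t within {0<..<1})"
    by (rule has_vector_derivative_within_subset) auto
  then have "(V has_vector_derivative Dh V t) (at t)"
    using at_within_open[of t "{0<..<1::real}"] assms by auto
  then show ?thesis using has_real_derivative_iff_has_vector_derivative by blast
qed

lemma V_cont: "continuous_on {0<..1} V"
proof -
  have "\<forall>x\<in>{0<..1}. V differentiable (at x within {0<..1})" using SV unfolding SV0star_def C1_half_def by auto
  then show ?thesis
    by (meson continuous_on_eq_continuous_within differentiable_imp_continuous_within)
qed

lemma V_lin: "\<exists>c1>0. \<forall>x\<in>{0<..1}. c1 * x \<le> V x"
proof -
  have lim: "((\<lambda>x. x * Dh V x / V x) \<longlongrightarrow> 0) (at_right 0)" using SV unfolding SV0star_def by auto
  have "eventually (\<lambda>x. x * Dh V x / V x < 1) (at_right 0)"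
    using order_tendstoD(2)[OF lim] by simp
  then obtain d where d: "d > 0" "\<And>t. 0 < t \<Longrightarrow> t < d \<Longrightarrow> t * Dh V t / V t < 1"
    unfolding eventually_at_right_field by auto
  define \<delta> where "\<delta> = min (d/2) (1/2)"
  have \<delta>: "0 < \<delta>" "\<delta> < d" "\<delta> < 1" using d unfolding \<delta>_def by auto
  have W: "V \<delta> / \<delta> \<le> V x / x" if x: "0 < x" "x \<le> \<delta>" for x
  proof (rule DERIV_nonpos_imp_decreasing_open[OF x(2)])
    fix t assume t: "x < t" "t < \<delta>"
    have t0: "0 < t" "t < 1" "t < d" using t x \<delta> by auto
    have Vt: "V t > 0" using Vpos t0 by auto
    have "t * Dh V t / V t < 1" using d t0 by auto
    then have le: "Dh V t * t - V t * 1 \<le> 0" using Vt by (simp add: divide_less_eq mult.commute)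
    have "((\<lambda>s. V s / s) has_real_derivative (Dh V t * t - V t * 1) / (t * t)) (at t)"
      using DERIV_divide[OF V_deriv[OF t0(1,2)] DERIV_ident] t0 by simp
    moreover have "(Dh V t * t - V t * 1) / (t * t) \<le> 0" using le t0 by (simp add: divide_nonpos_pos)
    ultimately show "\<exists>y. ((\<lambda>s. V s / s) has_real_derivative y) (at t) \<and> y \<le> 0" by blast
  next
    show "continuous_on {x..\<delta>} (\<lambda>s. V s / s)"
      using x \<delta> by (intro continuous_intros continuous_on_subset[OF V_cont]) auto
  qed
  have cc: "continuous_on {\<delta>..1} V" using \<delta> by (intro continuous_on_subset[OF V_cont]) auto
  obtain xm where xm: "xm \<in> {\<delta>..1}" "\<forall>y\<in>{\<delta>..1}. V xm \<le> V y"
    using continuous_attains_inf[of "{\<delta>..1}" V] cc \<delta> by auto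
  have vm: "0 < V xm" using Vpos xm \<delta> by auto
  have vd: "0 < V \<delta> / \<delta>" using Vpos \<delta> by auto
  define c1 where "c1 = min (V \<delta> / \<delta>) (V xm)"
  have "c1 > 0" using vm vd c1_def by auto
  moreover have "c1 * x \<le> V x" if x: "x \<in> {0<..1}" for x
  proof (cases "x \<le> \<delta>")
    case True
    then have "V \<delta> / \<delta> \<le> V x / x" using W x by auto
    then have "V \<delta> / \<delta> * x \<le> V x" using x by (simp add: le_divide_eq)
    moreover have "c1 * x \<le> V \<delta> / \<delta> * x" using x c1_def by (intro mult_right_mono) auto
    ultimately show ?thesis by linarith
  next
    case False
    then have "V xm \<le> V x" using xm x by auto
    moreover have "c1 * x \<le> c1" using x \<open>c1 > 0\<close> by (simp add: mult_left_le)
    moreover have "c1 \<le> V xm" using c1_def by auto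
    ultimately show ?thesis by linarith
  qed
  ultimately show ?thesis by blast
qed

definition N where "N = nat \<lceil>\<gamma>\<rceil> + 1"

lemma N_ge: "\<gamma> + 1 \<le> real N" unfolding N_def by linarith

lemma u_deriv: assumes "0 < t" "t < 1" shows "(u has_real_derivative D01 u t) (at t)"
proof -
  have "u differentiable (at t within {0..1})" using C2u assms unfolding C2_01_def by auto
  then have "(u has_vector_derivative D01 u t) (at t within {0..1})"
    unfolding D01_def using vector_derivative_works by blast
  then have "(u has_vector_derivative D01 u t) (at t)"
    using at_within_interior[of t "{0..1::real}"] assms by auto
  then show ?thesis using has_real_derivative_iff_has_vector_derivative by blast
qed

lemma u_lower: "\<exists>k>0. \<forall>x\<in>{0..1}. k * x ^ Suc N \<le> u x"
proof -
  obtain c1 where c1: "c1 > 0" "\<forall>x\<in>{0<..1}. c1 * x \<le> V x" using V_lin by blast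
  have u': "c1 * t ^ N \<le> D01 u t" if t: "0 < t" "t \<le> 1" for t
  proof -
    have "t ^ N = t powr real N" using t by (simp add: powr_realpow)
    also have "\<dots> \<le> t powr (\<gamma> + 1)" using powr_mono'[OF N_ge, of t] t by auto
    also have "\<dots> = t powr \<gamma> * t" using t by (simp add: powr_add)
    finally have "c1 * t ^ N \<le> t powr \<gamma> * (c1 * t)" using c1 by (simp add: mult_left_mono algebra_simps)
    also have "\<dots> \<le> t powr \<gamma> * V t" using c1 t by (intro mult_left_mono) auto
    also have "\<dots> = D01 u t" using u'V t by auto
    finally show ?thesis .
  qed
  define k where "k = c1 / real (Suc N)"
  have "k > 0" using c1 k_def by auto
  moreover have "k * x ^ Suc N \<le> u x" if x: "x \<in> {0..1}" for x
  proof -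
    let ?h = "\<lambda>t. u t - k * t ^ Suc N"
    have "?h 0 \<le> ?h x"
    proof (rule DERIV_nonneg_imp_increasing_open[of 0 x ?h])
      show "0 \<le> x" using x by auto
      fix t :: real assume t: "0 < t" "t < x"
      have t1: "t < 1" using t x by auto
      have "(?h has_real_derivative D01 u t - k * (real (Suc N) * t ^ (Suc N - Suc 0))) (at t)"
        by (intro DERIV_diff DERIV_cmult DERIV_pow u_deriv[OF t(1) t1])
      then have der: "(?h has_real_derivative D01 u t - k * (real (Suc N) * t ^ N)) (at t)" by simp
      have eq: "k * (real (Suc N) * t ^ N) = c1 * t ^ N" unfolding k_def by simp
      have der2: "(?h has_real_derivative D01 u t - c1 * t ^ N) (at t)" using der unfolding eq .
      have "0 \<le> D01 u t - c1 * t ^ N" using u'[OF t(1)] t1 by simp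
      then show "\<exists>y. (?h has_real_derivative y) (at t) \<and> 0 \<le> y" using der2 by blast
    next
      show "continuous_on {0..x} ?h"
        using x by (intro continuous_intros continuous_on_subset[OF C2_cont0[OF C2u]]) auto
    qed
    then show ?thesis using u0 by simp
  qed
  ultimately show ?thesis by blast
qed

lemma q_pos: "0 < q n"
proof (induction n)
  case 0 then show ?case by simp
next
  case (Suc n)
  have "a 0 < a (q n)" using q01[of n] Suc by (intro strict_mono_onD[OF a_smono]) auto
  moreover have "q (Suc n) = a (q n)" by simp
  ultimately show ?case using a0 by simp
qed

lemma Jlen_eq: "Jlen a (Suc j) = u (q j)"
  unfolding Jlen_def qpt_def using au q01[of j] by simp

lemma abscissa: "abscissa_J a < 1"
proof -
  obtain k where k: "k > 0" "\<forall>x\<in>{0..1}. k * x ^ Suc N \<le> u x" using u_lower by blast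
  define M where "M = real (Suc N)"
  define e where "e = 1 / (2 * M)"
  have M: "M \<ge> 1" using M_def by simp
  have e: "0 < e" "e < 1" "M * e = 1/2" using M unfolding e_def by auto
  define s where "s = 1 - e"
  define C where "C = 2 * k powr (- e)"
  have bound: "Jlen a (Suc j) powr s \<le> C * (sqrt (q j) - sqrt (q (Suc j)))" for j
  proof -
    let ?q = "q j" and ?q' = "q (Suc j)"
    have q: "0 < ?q" "?q \<le> 1" using q_pos q01 by auto
    have q': "0 < ?q'" "?q' \<le> ?q" using q_pos[of "Suc j"] q_dec[of j] by blast+
    define D where "D = u ?q"
    have D: "D = ?q - ?q'" using au q unfolding D_def by simp
    have Dl: "k * ?q ^ Suc N \<le> D" using k q unfolding D_def by auto
    have kq: "0 < k * ?q ^ Suc N" using k q by auto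
    have "D powr s = D powr (1 + - e)" unfolding s_def by simp
    also have "\<dots> = D powr 1 * D powr (- e)" by (rule powr_add)
    also have "\<dots> = D * D powr (- e)" using kq Dl by simp
    also have "\<dots> \<le> D * (k * ?q ^ Suc N) powr (- e)"
      using powr_mono2'[of "- e" "k * ?q ^ Suc N" D] e kq Dl by (intro mult_left_mono) auto
    also have "(k * ?q ^ Suc N) powr (- e) = k powr (- e) * ?q powr (- (M * e))"
    proof -
      have "?q ^ Suc N = ?q powr M" by (simp only: M_def powr_realpow[OF q(1)])
      then show ?thesis using k q by (simp add: powr_mult powr_powr)
    qed
    also have "?q powr (- (M * e)) = inverse (sqrt ?q)"
    proof -
      have "?q powr (- (M * e)) = inverse (?q powr (1/2))" by (simp only: e(3) powr_minus)
      then show ?thesis using q by (simp add: powr_half_sqrt)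
    qed
    finally have t1: "D powr s \<le> k powr (- e) * (D / sqrt ?q)" by (simp add: divide_inverse algebra_simps)
    have "D = (sqrt ?q - sqrt ?q') * (sqrt ?q + sqrt ?q')" using D q q'
      by (simp add: algebra_simps)
    also have "\<dots> \<le> (sqrt ?q - sqrt ?q') * (2 * sqrt ?q)"
      using q' by (intro mult_left_mono) auto
    finally have Dle: "D \<le> (sqrt ?q - sqrt ?q') * (2 * sqrt ?q)" .
    have sq: "0 < sqrt ?q" using q by simp
    have "D / sqrt ?q \<le> ((sqrt ?q - sqrt ?q') * (2 * sqrt ?q)) / sqrt ?q"
      using divide_right_mono[OF Dle, of "sqrt ?q"] sq by simp
    also have "\<dots> = 2 * (sqrt ?q - sqrt ?q')" using sq by simp
    finally have "D / sqrt ?q \<le> 2 * (sqrt ?q - sqrt ?q')" .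
    then have "k powr (- e) * (D / sqrt ?q) \<le> k powr (- e) * (2 * (sqrt ?q - sqrt ?q'))"
      by (intro mult_left_mono) auto
    then show ?thesis using t1 unfolding Jlen_eq D_def[symmetric] C_def by (simp add: algebra_simps)
  qed
  have dec: "decseq (\<lambda>j. sqrt (q j))" using q_dec by (intro decseq_SucI) auto
  obtain L where "(\<lambda>j. sqrt (q j)) \<longlonglongrightarrow> L" using decseq_convergent[OF dec, of 0] q01 by (metis atLeastAtMost_iff real_sqrt_ge_zero)
  then have "summable (\<lambda>j. sqrt (q j) - sqrt (q (Suc j)))" by (rule telescope_summable')
  then have "summable (\<lambda>j. C * (sqrt (q j) - sqrt (q (Suc j))))" by (rule summable_mult)
  then have sm: "summable (\<lambda>j. Jlen a (Suc j) powr s)"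
    by (rule summable_comparison_test'[where N=0]) (use bound in auto)
  have "abscissa_J a \<le> ereal s"
    unfolding abscissa_J_def using sm by (intro Inf_lower) auto
  also have "ereal s < 1" using e s_def by simp
  finally show ?thesis .
qed

end


theorem theorem7p1:
  fixes \<gamma> c :: real and a b :: "real \<Rightarrow> real"
  assumes "\<gamma> > 0" and "DRIS \<gamma> c a b"
  shows "good_class a b \<and> DRBGC c a b"
proof -
  have dri: "DRI c a b" using assms(2) unfolding DRIS_def by auto
  obtain u V where uv: "\<forall>x\<in>{0..1}. a x = x - u x" "C2_01 u" "u 0 = 0" "SV0star V"
      "\<forall>x\<in>{0<..1}. D01 u x = x powr \<gamma> * V x"
    using assms(2) unfolding DRIS_def by blast
  interpret dris c a b \<gamma> u V by unfold_locales (use dri uv assms(1) in auto)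
  have g: "good_class a b" unfolding good_class_def using abscissa limsup_eta distortion by blast
  show ?thesis using g dri unfolding DRBGC_def by blast
qed

end
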